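(* Let $G \le \mathrm{Sym}(\mathbb{N})$ be a countable cofinitary group and let $H$ be a countable group. Then there exist permutations $\vec f = \langle f_n : n \in \mathbb{N}\rangle$ in $\mathrm{Sym}(\mathbb{N})$ such that the subgroup generated by $\{f_n : n\in\mathbb{N}\}$ is isomorphic to $H$ and the subgroup $\langle G, \vec f\,\rangle$ generated by $G \cup \{f_n : n\in\mathbb{N}\}$ is cofinitary.
   Context: $\mathrm{Sym}(\mathbb{N})$ is the group of bijections $\mathbb{N}\to\mathbb{N}$ under composition. A permutation is cofinitary if it is the identity or has only finitely many fixed points; a subgroup of $\mathrm{Sym}(\mathbb{N})$ is cofinitary if all its elements are cofinitary. *)

theory Defs
  imports "HOL-Algebra.Algebra"
begin

text \<open>Sym(N): the group of all bijections of nat under composition.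
  (Extensionality on UNIV is vacuous, so the carrier is exactly the set of bijections.)\<close>
abbreviation SymN :: "(nat \<Rightarrow> nat) monoid" where
  "SymN \<equiv> BijGroup (UNIV :: nat set)"

definition cofinitary_perm :: "(nat \<Rightarrow> nat) \<Rightarrow> bool" where
  "cofinitary_perm g \<longleftrightarrow> g = id \<or> finite {n. g n = n}"

definition cofinitary_group :: "(nat \<Rightarrow> nat) set \<Rightarrow> bool" where
  "cofinitary_group K \<longleftrightarrow> subgroup K SymN \<and> (\<forall>g\<in>K. cofinitary_perm g)"

end

theory Submission
  imports Defs
begin


lemma SymN_carrier: "f \<in> carrier SymN \<longleftrightarrow> bij f"
  by (simp add: BijGroup_def Bij_def extensional_def bij_betw_def)

lemma SymN_mult: "f \<in> carrier SymN \<Longrightarrow> g \<in> carrier SymN \<Longrightarrow> f \<otimes>\<^bsub>SymN\<^esub> g = f \<circ> g"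
  by (simp add: BijGroup_def compose_def restrict_UNIV o_def)

lemma SymN_one: "\<one>\<^bsub>SymN\<^esub> = id"
  by (simp add: BijGroup_def id_def restrict_UNIV)

lemma SymN_inv: "f \<in> carrier SymN \<Longrightarrow> m_inv SymN f = inv_into UNIV f"
  using inv_BijGroup[of f UNIV] by (simp add: BijGroup_def restrict_UNIV)

lemma SymN_group: "group SymN" by (rule group_BijGroup)




locale cons =
  fixes G :: "(nat \<Rightarrow> nat) set" and H :: "('a, 'b) monoid_scheme"
    and eG :: "nat \<Rightarrow> nat \<Rightarrow> nat" and q :: "nat \<Rightarrow> 'a \<times> nat"
  assumes grpH: "group H" and cofG: "cofinitary_group G"
    and eG: "range eG = G" and q: "range q = carrier H \<times> UNIV"
begin

definition bad :: "nat \<Rightarrow> (nat \<times> ('a \<times> nat)) set \<Rightarrow> nat set" where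
  "bad n A = fst ` A \<union> (\<Union>g \<in> eG ` {..n} - {id}. {x. g x = x} \<union> g ` fst ` A \<union> g -` fst ` A)"

definition step :: "nat \<Rightarrow> (nat \<times> ('a \<times> nat)) set \<Rightarrow> (nat \<times> ('a \<times> nat)) set" where
  "step n A = (if even n then
      (if n div 2 \<in> fst ` A then A else insert (n div 2, (\<one>\<^bsub>H\<^esub>, LEAST i. i \<notin> snd ` snd ` A)) A)
    else (if q (n div 2) \<in> snd ` A then A else insert (LEAST y. y \<notin> bad n A, q (n div 2)) A))"

primrec Aseq :: "nat \<Rightarrow> (nat \<times> ('a \<times> nat)) set" where
  "Aseq 0 = {}"
| "Aseq (Suc n) = step n (Aseq n)"

lemma pb_insert_aux: "(\<forall>a\<in>A. \<forall>b\<in>A. (fst a = fst b) = (snd a = snd b)) \<Longrightarrow> x \<notin> fst ` A \<Longrightarrow> p \<notin> snd ` A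
   \<Longrightarrow> (\<forall>a\<in>insert (x,p) A. \<forall>b\<in>insert (x,p) A. (fst a = fst b) = (snd a = snd b))"
  by (auto simp: image_iff)

definition pb :: "(nat \<times> ('a \<times> nat)) set \<Rightarrow> bool" where
  "pb A \<longleftrightarrow> (\<forall>a\<in>A. \<forall>b\<in>A. (fst a = fst b) = (snd a = snd b))"

lemma G_sub: "g \<in> G \<Longrightarrow> bij g"
  using cofG by (auto simp: cofinitary_group_def subgroup_def SymN_carrier)

lemma G_cof: "g \<in> G \<Longrightarrow> g \<noteq> id \<Longrightarrow> finite {x. g x = x}"
  using cofG by (auto simp: cofinitary_group_def cofinitary_perm_def)

lemma finite_bad: assumes "finite A" shows "finite (bad n A)"
proof -
  have "finite ({x. g x = x} \<union> g ` fst ` A \<union> g -` fst ` A)" if "g \<in> eG ` {..n} - {id}" for g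
  proof -
    have g: "g \<in> G" "g \<noteq> id" using eG that by auto
    show ?thesis
      using G_cof[OF g] G_sub[OF g(1)] assms
      by (auto intro!: finite_vimageI simp: bij_def)
  qed
  then show ?thesis unfolding bad_def using assms by auto
qed

lemma ex_notin: "finite (S :: nat set) \<Longrightarrow> \<exists>y. y \<notin> S"
  using infinite_UNIV_nat by (metis UNIV_I finite_subset subsetI)

lemma inv_Aseq: "finite (Aseq n) \<and> pb (Aseq n) \<and> snd ` Aseq n \<subseteq> carrier H \<times> UNIV"
proof (induction n)
  case 0
  then show ?case by (simp add: pb_def)
next
  case (Suc n)
  let ?A = "Aseq n"
  have fin: "finite ?A" and pbA: "pb ?A" and rA: "snd ` ?A \<subseteq> carrier H \<times> UNIV" using Suc by auto
  show ?case
  proof (cases "even n")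
    case True
    let ?i = "LEAST i. i \<notin> snd ` snd ` ?A"
    have "\<exists>i. i \<notin> snd ` snd ` ?A" using fin by (intro ex_notin) auto
    then have fresh: "?i \<notin> snd ` snd ` ?A" by (rule LeastI_ex)
    have one: "\<one>\<^bsub>H\<^esub> \<in> carrier H" using grpH by (simp add: group.is_monoid monoid.one_closed)
    show ?thesis
    proof (cases "n div 2 \<in> fst ` ?A")
      case True
      then show ?thesis using Suc \<open>even n\<close> by (simp add: step_def)
    next
      case False
      have "pb (insert (n div 2, (\<one>\<^bsub>H\<^esub>, ?i)) ?A)"
        using pbA False fresh unfolding pb_def by (intro pb_insert_aux) (auto simp: image_iff)
      then show ?thesis using Suc \<open>even n\<close> False one by (simp add: step_def)
    qed
  next
    case False
    let ?y = "LEAST y. y \<notin> bad n ?A"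
    have "\<exists>y. y \<notin> bad n ?A" using fin finite_bad ex_notin by blast
    then have yb: "?y \<notin> bad n ?A" by (rule LeastI_ex)
    then have yd: "?y \<notin> fst ` ?A" by (simp add: bad_def)
    have qin: "q (n div 2) \<in> carrier H \<times> UNIV" using q by auto
    show ?thesis
    proof (cases "q (n div 2) \<in> snd ` ?A")
      case True
      then show ?thesis using Suc False by (simp add: step_def)
    next
      case F2: False
      have "pb (insert (?y, q (n div 2)) ?A)"
        using pbA F2 yd unfolding pb_def by (intro pb_insert_aux) auto
      then show ?thesis using Suc False F2 qin by (simp add: step_def)
    qed
  qed
qed

lemma Aseq_Suc_mono: "Aseq n \<subseteq> Aseq (Suc n)"
  by (auto simp: step_def)

lemma Aseq_mono: "m \<le> n \<Longrightarrow> Aseq m \<subseteq> Aseq n"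
  using lift_Suc_mono_le[of Aseq, OF Aseq_Suc_mono] by blast

lemma cover1: "n \<in> fst ` Aseq (Suc (2*n))"
proof -
  have "step (2*n) B = (if n \<in> fst ` B then B else insert (n, (\<one>\<^bsub>H\<^esub>, LEAST i. i \<notin> snd ` snd ` B)) B)" for B
    unfolding step_def by simp
  then show ?thesis by (simp only: Aseq.simps(2)) (auto intro: image_eqI)
qed

lemma cover2: "q m \<in> snd ` Aseq (Suc (Suc (2*m)))"
proof -
  have "odd (Suc (2*m))" "Suc (2*m) div 2 = m" by simp_all
  then have "step (Suc (2*m)) B = (if q m \<in> snd ` B then B else insert (LEAST y. y \<notin> bad (Suc (2*m)) B, q m) B)" for B
    unfolding step_def by presburger
  then show ?thesis by (simp only: Aseq.simps(2)) (auto intro: image_eqI)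
qed

end



context cons begin

definition R where "R = (\<Union>n. Aseq n)"
definition pi where "pi x = (SOME p. (x, p) \<in> R)"
definition psi where "psi p = (SOME x. (x, p) \<in> R)"
definition F where "F h x = psi (h \<otimes>\<^bsub>H\<^esub> fst (pi x), snd (pi x))"

lemma pb_R: "a \<in> R \<Longrightarrow> b \<in> R \<Longrightarrow> (fst a = fst b) = (snd a = snd b)"
proof -
  assume "a \<in> R" "b \<in> R"
  then obtain m n where "a \<in> Aseq m" "b \<in> Aseq n" by (auto simp: R_def)
  then have "a \<in> Aseq (max m n)" "b \<in> Aseq (max m n)" using Aseq_mono[of m "max m n"] Aseq_mono[of n "max m n"] by auto
  then show ?thesis using inv_Aseq[of "max m n"] unfolding pb_def by blast
qed

lemma R_range: "(x, p) \<in> R \<Longrightarrow> p \<in> carrier H \<times> UNIV"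
  using inv_Aseq by (fastforce simp: R_def)

lemma R_dom: "\<exists>p. (x, p) \<in> R"
proof -
  obtain a where "a \<in> Aseq (Suc (2*x))" "x = fst a" using cover1[of x] by blast
  then show ?thesis unfolding R_def by (metis UNIV_I UN_I prod.collapse)
qed

lemma R_ran: "p \<in> carrier H \<times> UNIV \<Longrightarrow> \<exists>x. (x, p) \<in> R"
proof -
  assume "p \<in> carrier H \<times> UNIV"
  then obtain m where "p = q m" using q by (metis rangeE)
  obtain a where "a \<in> Aseq (Suc (Suc (2*m)))" "q m = snd a" using cover2[of m] by blast
  then show ?thesis unfolding R_def using \<open>p = q m\<close> by (metis UNIV_I UN_I prod.collapse)
qed

lemma pi_R: "(x, pi x) \<in> R"
  unfolding pi_def using R_dom by (metis someI_ex)

lemma pi_carrier: "pi x \<in> carrier H \<times> UNIV"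
  using R_range pi_R by blast

lemma pi_eq: "(x, p) \<in> R \<Longrightarrow> pi x = p"
proof -
  assume "(x, p) \<in> R"
  from pb_R[OF pi_R[of x] this] show ?thesis by simp
qed

lemma psi_R: "p \<in> carrier H \<times> UNIV \<Longrightarrow> (psi p, p) \<in> R"
  unfolding psi_def using R_ran by (metis someI_ex)

lemma pi_psi: "p \<in> carrier H \<times> UNIV \<Longrightarrow> pi (psi p) = p"
  using pi_eq psi_R by blast

lemma psi_pi: "psi (pi x) = x"
  using pb_R[OF psi_R[OF pi_carrier[of x]] pi_R[of x]] by simp

lemma pi_inj: "pi x = pi y \<Longrightarrow> x = y"
  by (metis psi_pi)

lemma pi_F: "h \<in> carrier H \<Longrightarrow> pi (F h x) = (h \<otimes>\<^bsub>H\<^esub> fst (pi x), snd (pi x))"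
  unfolding F_def using pi_carrier[of x] grpH
  by (intro pi_psi) (auto intro: monoid.m_closed group.is_monoid)

lemma F_mult: "h \<in> carrier H \<Longrightarrow> h' \<in> carrier H \<Longrightarrow> F h (F h' x) = F (h \<otimes>\<^bsub>H\<^esub> h') x"
proof -
  assume h: "h \<in> carrier H" "h' \<in> carrier H"
  have a: "fst (pi x) \<in> carrier H" using pi_carrier[of x] by auto
  have "F h (F h' x) = psi (h \<otimes>\<^bsub>H\<^esub> fst (pi (F h' x)), snd (pi (F h' x)))" by (simp only: F_def)
  also have "\<dots> = psi (h \<otimes>\<^bsub>H\<^esub> (h' \<otimes>\<^bsub>H\<^esub> fst (pi x)), snd (pi x))" by (simp only: pi_F[OF h(2)] fst_conv snd_conv)
  also have "\<dots> = psi ((h \<otimes>\<^bsub>H\<^esub> h') \<otimes>\<^bsub>H\<^esub> fst (pi x), snd (pi x))"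
    using grpH h a by (simp add: group.is_monoid monoid.m_assoc)
  also have "\<dots> = F (h \<otimes>\<^bsub>H\<^esub> h') x" by (simp only: F_def)
  finally show ?thesis .
qed

lemma F_one: "F \<one>\<^bsub>H\<^esub> x = x"
proof -
  have a: "fst (pi x) \<in> carrier H" using pi_carrier[of x] by auto
  have "F \<one>\<^bsub>H\<^esub> x = psi (fst (pi x), snd (pi x))"
    using grpH a by (simp add: F_def group.is_monoid monoid.l_one)
  also have "\<dots> = x" using psi_pi[of x] by simp
  finally show ?thesis .
qed

lemma F_comp: "h \<in> carrier H \<Longrightarrow> h' \<in> carrier H \<Longrightarrow> F h \<circ> F h' = F (h \<otimes>\<^bsub>H\<^esub> h')"
  using F_mult by auto

lemma F_bij: "h \<in> carrier H \<Longrightarrow> bij (F h)"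
proof -
  assume h: "h \<in> carrier H"
  have i: "inv\<^bsub>H\<^esub> h \<in> carrier H" using grpH h by (simp add: group.inv_closed)
  have "F h \<circ> F (inv\<^bsub>H\<^esub> h) = id" "F (inv\<^bsub>H\<^esub> h) \<circ> F h = id"
    using F_comp[OF h i] F_comp[OF i h] grpH h by (auto simp: group.r_inv group.l_inv F_one fun_eq_iff)
  then show ?thesis using o_bij by blast
qed

lemma F_free: "h \<in> carrier H \<Longrightarrow> F h x = x \<Longrightarrow> h = \<one>\<^bsub>H\<^esub>"
proof -
  assume h: "h \<in> carrier H" and fx: "F h x = x"
  have "pi (F h x) = pi x" using fx by simp
  then have "h \<otimes>\<^bsub>H\<^esub> fst (pi x) = fst (pi x)" using pi_F[OF h] by (metis fst_conv)
  moreover have "fst (pi x) \<in> carrier H" using pi_carrier[of x] by auto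
  ultimately show ?thesis using group.r_cancel_one[OF grpH _ h] by blast
qed

lemma F_free': "h \<in> carrier H \<Longrightarrow> F h \<noteq> id \<Longrightarrow> F h x \<noteq> x"
  using F_free F_one by fastforce

lemma F_inj: "inj_on F (carrier H)"
proof (rule inj_onI)
  fix h h' assume h: "h \<in> carrier H" "h' \<in> carrier H" "F h = F h'"
  let ?x = "psi (\<one>\<^bsub>H\<^esub>, 0)"
  have one: "\<one>\<^bsub>H\<^esub> \<in> carrier H" using grpH by (simp add: group.is_monoid monoid.one_closed)
  have px: "pi ?x = (\<one>\<^bsub>H\<^esub>, 0)" using pi_psi one by simp
  have "pi (F h ?x) = pi (F h' ?x)" using h by simp
  then have "h \<otimes>\<^bsub>H\<^esub> \<one>\<^bsub>H\<^esub> = h' \<otimes>\<^bsub>H\<^esub> \<one>\<^bsub>H\<^esub>" using pi_F[OF h(1), of ?x] pi_F[OF h(2), of ?x] px by simp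
  then show "h = h'" using grpH h by (simp add: group.is_monoid monoid.r_one)
qed

end



context cons begin

definition ev :: "(nat \<Rightarrow> nat) + 'a \<Rightarrow> nat \<Rightarrow> nat" where
  "ev a = (case a of Inl g \<Rightarrow> g | Inr h \<Rightarrow> F h)"

definition evw :: "((nat \<Rightarrow> nat) + 'a) list \<Rightarrow> nat \<Rightarrow> nat" where
  "evw l = foldr (\<lambda>a f. ev a \<circ> f) l id"

definition valid :: "((nat \<Rightarrow> nat) + 'a) list \<Rightarrow> bool" where
  "valid l \<longleftrightarrow> set l \<subseteq> Inl ` G \<union> Inr ` carrier H"

definition D where "D m = fst ` Aseq m"
definition st where "st z = (LEAST m. z \<in> D (Suc m))"

lemma evw_Nil[simp]: "evw [] = id" by (simp add: evw_def)
lemma evw_Cons[simp]: "evw (a # l) = ev a \<circ> evw l" by (simp add: evw_def)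
lemma evw_append[simp]: "evw (l1 @ l2) = evw l1 \<circ> evw l2"
  by (induction l1) auto
lemma ev_Inl[simp]: "ev (Inl g) = g" by (simp add: ev_def)
lemma ev_Inr[simp]: "ev (Inr h) = F h" by (simp add: ev_def)

lemma D_mono: "m \<le> n \<Longrightarrow> D m \<subseteq> D n"
  unfolding D_def using Aseq_mono by blast

lemma D_finite: "finite (D m)" unfolding D_def using inv_Aseq by auto

lemma st_props: "z \<in> D (Suc (st z)) \<and> z \<notin> D (st z)"
proof -
  have ex: "\<exists>m. z \<in> D (Suc m)" using cover1[of z] unfolding D_def by blast
  have 1: "z \<in> D (Suc (st z))" unfolding st_def by (rule LeastI_ex[OF ex])
  have 2: "z \<notin> D (st z)"
  proof (cases "st z")
    case 0 then show ?thesis by (simp add: D_def)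
  next
    case (Suc k)
    then have "k < st z" by simp
    then have "\<not> z \<in> D (Suc k)" unfolding st_def by (rule not_less_Least)
    then show ?thesis using Suc by simp
  qed
  show ?thesis using 1 2 by blast
qed

lemma finite_sub_eG: "finite Y \<Longrightarrow> Y \<subseteq> G \<Longrightarrow> \<exists>m. Y \<subseteq> eG ` {..m}"
proof (induction Y rule: finite_induct)
  case empty then show ?case by auto
next
  case (insert g Y)
  then obtain m where m: "Y \<subseteq> eG ` {..m}" by auto
  obtain k where k: "eG k = g" using insert.prems eG by auto
  have "insert g Y \<subseteq> eG ` {..max m k}" using m k by auto
  then show ?case by blast
qed

lemma xs_step: "j < length l \<Longrightarrow> evw (drop j l) x = ev (l!j) (evw (drop (Suc j) l) x)"
  by (simp add: Cons_nth_drop_Suc[symmetric])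


lemma core:
  assumes val: "valid l" and len: "length l \<ge> 2" and nt: "\<forall>a\<in>set l. ev a \<noteq> id"
    and alt: "\<forall>j. Suc j < length l \<longrightarrow> isl (l!j) \<noteq> isl (l!Suc j)"
    and cyc: "isl (l!0) \<noteq> isl (l!(length l - 1))"
  shows "finite {x. evw l x = x}"
proof -
  have "finite (Inl -` set l :: (nat \<Rightarrow> nat) set)" by (rule finite_vimageI) (auto simp: inj_on_def)
  moreover have "(Inl -` set l :: (nat \<Rightarrow> nat) set) = {g. Inl g \<in> set l}" by auto
  ultimately have "finite {g. Inl g \<in> set l}" by simp
  moreover have "{g. Inl g \<in> set l} \<subseteq> G" using val by (auto simp: valid_def)
  ultimately obtain m0 where m0: "{g. Inl g \<in> set l} \<subseteq> eG ` {..m0}" using finite_sub_eG by blast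
  let ?n = "length l"
  have "{x. evw l x = x} \<subseteq> D m0"
  proof
    fix x assume "x \<in> {x. evw l x = x}"
    then have fx: "evw l x = x" by simp
    show "x \<in> D m0"
    proof (rule ccontr)
      assume xnot: "x \<notin> D m0"
      define xs where "xs j = evw (drop j l) x" for j
      have xs0: "xs 0 = x" using fx by (simp add: xs_def)
      have xsn: "xs ?n = x" by (simp add: xs_def)
      have xsS: "j < ?n \<Longrightarrow> xs j = ev (l!j) (xs (Suc j))" for j
        unfolding xs_def by (rule xs_step)
      define S where "S = xs ` {..<?n}"
      have Sfin: "finite S" by (simp add: S_def)
      have Sne: "S \<noteq> {}" using len by (auto simp: S_def lessThan_empty_iff)
      have xS: "x \<in> S" using len xs0 by (auto simp: S_def image_iff intro!: bexI[of _ 0])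
      define M where "M = Max (st ` S)"
      have "M \<in> st ` S" unfolding M_def using Sfin Sne by (intro Max_in) auto
      then obtain j where j: "j < ?n" "st (xs j) = M" by (auto simp: S_def)
      define y where "y = xs j"
      have SD: "z \<in> D (Suc M)" if "z \<in> S" for z
      proof -
        have "st z \<le> M" unfolding M_def using Sfin that by (intro Max_ge) auto
        then show ?thesis using st_props[of z] D_mono[of "Suc (st z)" "Suc M"] by auto
      qed
      have m0M: "m0 \<le> M"
      proof (rule ccontr)
        assume "\<not> m0 \<le> M"
        moreover have "st x \<le> M" unfolding M_def using Sfin xS by (intro Max_ge) auto
        ultimately have "Suc (st x) \<le> m0" by simp
        then show False using st_props[of x] D_mono xnot by blast
      qed
      have ynew: "y \<in> D (Suc M)" "y \<notin> D M" using st_props[of y] j by (auto simp: y_def)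
      have z1: "xs (Suc j) \<in> D (Suc M)"
      proof (cases "Suc j = ?n")
        case True then show ?thesis using xsn xS SD by simp
      next
        case False then show ?thesis using j SD by (auto simp: S_def)
      qed
      have y1: "y = ev (l!j) (xs (Suc j))" using xsS j by (simp add: y_def)
      define p where "p = (if j = 0 then ?n - 1 else j - 1)"
      have pn: "p < ?n" using j len by (auto simp: p_def)
      have z2: "xs p \<in> D (Suc M)" using pn SD by (auto simp: S_def)
      have y2: "xs p = ev (l!p) y"
      proof (cases "j = 0")
        case True
        have "Suc (?n - 1) = ?n" using len by simp
        then have "xs p = ev (l!p) (xs ?n)" using xsS[of "?n - 1"] len True by (simp add: p_def)
        then show ?thesis using xsn xs0 True by (simp add: y_def)
      next
        case False
        then show ?thesis using xsS[of "j - 1"] j by (simp add: p_def y_def)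
      qed
      have diff: "isl (l!j) \<noteq> isl (l!p)"
      proof (cases "j = 0")
        case True then show ?thesis using cyc by (simp add: p_def)
      next
        case False then show ?thesis using alt[rule_format, of "j - 1"] j by (simp add: p_def)
      qed
      have ljS: "l!j \<in> set l" "l!p \<in> set l" using j pn by auto
      obtain g z where gz: "Inl g \<in> set l" "z \<in> D (Suc M)" "y = g z \<or> g y = z"
      proof (cases "isl (l!j)")
        case True
        then obtain g where "l!j = Inl g" by (cases "l!j") auto
        then show ?thesis using that[of g "xs (Suc j)"] ljS z1 y1 by auto
      next
        case False
        then have "isl (l!p)" using diff by simp
        then obtain g where "l!p = Inl g" by (cases "l!p") auto
        then show ?thesis using that[of g "xs p"] ljS z2 y2 by auto
      qed
      obtain h z' where hz: "Inr h \<in> set l" "z' \<in> D (Suc M)" "y = F h z' \<or> z' = F h y"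
      proof (cases "isl (l!j)")
        case False
        then obtain h where "l!j = Inr h" by (cases "l!j") auto
        then show ?thesis using that[of h "xs (Suc j)"] ljS z1 y1 by auto
      next
        case True
        then have "\<not> isl (l!p)" using diff by simp
        then obtain h where "l!p = Inr h" by (cases "l!p") auto
        then show ?thesis using that[of h "xs p"] ljS z2 y2 by auto
      qed
      have AS: "Aseq (Suc M) = step M (Aseq M)" by simp
      show False
      proof (cases "even M")
        case True
        let ?i = "LEAST i. i \<notin> snd ` snd ` Aseq M"
        have notin: "M div 2 \<notin> fst ` Aseq M"
        proof
          assume "M div 2 \<in> fst ` Aseq M"
          then have "Aseq (Suc M) = Aseq M" using True by (simp add: step_def)
          then show False using ynew by (simp add: D_def)
        qed
        then have AS2: "Aseq (Suc M) = insert (M div 2, (\<one>\<^bsub>H\<^esub>, ?i)) (Aseq M)"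
          using True by (simp add: step_def)
        then have yeq: "y = M div 2" using ynew by (auto simp: D_def)
        have "(y, (\<one>\<^bsub>H\<^esub>, ?i)) \<in> R" using AS2 yeq unfolding R_def by blast
        then have piy: "pi y = (\<one>\<^bsub>H\<^esub>, ?i)" by (rule pi_eq)
        have hc: "h \<in> carrier H" using hz(1) val by (auto simp: valid_def)
        have Fh: "F h \<noteq> id" using nt hz(1) by force
        have sz: "snd (pi z') = ?i"
          using hz(3) pi_F[OF hc, of z'] pi_F[OF hc, of y] piy by auto
        have zy: "z' \<noteq> y" using hz(3) F_free'[OF hc Fh] by metis
        then have "z' \<in> D M" using hz(2) AS2 yeq by (auto simp: D_def)
        then obtain pz where "(z', pz) \<in> Aseq M" by (auto simp: D_def)
        moreover then have "pz = pi z'" using pi_eq[of z' pz] unfolding R_def by blast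
        ultimately have "?i \<in> snd ` snd ` Aseq M" using sz by force
        moreover have "\<exists>i. i \<notin> snd ` snd ` Aseq M" using inv_Aseq[of M] by (intro ex_notin) auto
        ultimately show False using LeastI_ex by metis
      next
        case False
        let ?y = "LEAST y. y \<notin> bad M (Aseq M)"
        have notin: "q (M div 2) \<notin> snd ` Aseq M"
        proof
          assume "q (M div 2) \<in> snd ` Aseq M"
          then have "Aseq (Suc M) = Aseq M" using False by (simp add: step_def)
          then show False using ynew by (simp add: D_def)
        qed
        then have AS2: "Aseq (Suc M) = insert (?y, q (M div 2)) (Aseq M)"
          using False by (simp add: step_def)
        then have yeq: "y = ?y" using ynew by (auto simp: D_def)
        have "\<exists>y. y \<notin> bad M (Aseq M)" using inv_Aseq[of M] finite_bad ex_notin by blast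
        then have yb: "y \<notin> bad M (Aseq M)" using yeq by (metis LeastI_ex)
        have gin: "g \<in> eG ` {..M} - {id}" using m0 gz(1) m0M nt by force
        have zD: "z = y \<or> z \<in> fst ` Aseq M" using gz(2) AS2 yeq by (auto simp: D_def)
        have "y \<in> {x. g x = x} \<union> g ` fst ` Aseq M \<union> g -` fst ` Aseq M"
          using zD gz(3) by auto
        then show False using yb gin unfolding bad_def by blast
      qed
    qed
  qed
  then show ?thesis using D_finite finite_subset by blast
qed

end



context cons begin

definition merge :: "(nat \<Rightarrow> nat) + 'a \<Rightarrow> (nat \<Rightarrow> nat) + 'a \<Rightarrow> (nat \<Rightarrow> nat) + 'a" where
  "merge a b = (case a of Inl g \<Rightarrow> (case b of Inl g' \<Rightarrow> Inl (g \<circ> g') | Inr _ \<Rightarrow> a)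
                         | Inr h \<Rightarrow> (case b of Inr h' \<Rightarrow> Inr (h \<otimes>\<^bsub>H\<^esub> h') | Inl _ \<Rightarrow> a))"

abbreviation "Lts \<equiv> Inl ` G \<union> Inr ` carrier H"

lemma G_comp: "g \<in> G \<Longrightarrow> g' \<in> G \<Longrightarrow> g \<circ> g' \<in> G"
proof -
  assume g: "g \<in> G" "g' \<in> G"
  have sg: "subgroup G SymN" using cofG by (simp add: cofinitary_group_def)
  have "g \<otimes>\<^bsub>SymN\<^esub> g' \<in> G" using sg g by (simp add: subgroup.m_closed)
  moreover have "g \<otimes>\<^bsub>SymN\<^esub> g' = g \<circ> g'" using g G_sub by (simp add: SymN_mult SymN_carrier)
  ultimately show ?thesis by simp
qed

lemma merge_ok: "a \<in> Lts \<Longrightarrow> b \<in> Lts \<Longrightarrow> isl a = isl b \<Longrightarrow>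
   merge a b \<in> Lts \<and> ev (merge a b) = ev a \<circ> ev b"
  using G_comp F_comp grpH by (auto simp: merge_def group.is_monoid monoid.m_closed)

lemma ev_bij: "a \<in> Lts \<Longrightarrow> bij (ev a)"
  using G_sub F_bij by auto

lemma conj_lemma:
  assumes s: "bij s" and h: "Xf \<circ> s = id \<or> finite {x. (Xf \<circ> s) x = x}"
  shows "s \<circ> Xf = id \<or> finite {x. (s \<circ> Xf) x = x}"
proof (cases "Xf \<circ> s = id")
  case True
  have "(s \<circ> Xf) x = x" for x
  proof -
    obtain w where "x = s w" using s by (metis bij_pointE)
    then show ?thesis using True by (metis comp_apply id_apply)
  qed
  then show ?thesis by auto
next
  case False
  then have fin: "finite {x. (Xf \<circ> s) x = x}" using h by simp
  have "{x. (s \<circ> Xf) x = x} \<subseteq> s ` {x. (Xf \<circ> s) x = x}"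
  proof
    fix x assume "x \<in> {x. (s \<circ> Xf) x = x}"
    then have "s (Xf x) = x" by simp
    then show "x \<in> s ` {x. (Xf \<circ> s) x = x}" by (metis (mono_tags, lifting) comp_apply image_eqI mem_Collect_eq)
  qed
  then show ?thesis using fin finite_subset by blast
qed

lemma decomp2: "Suc j < length l \<Longrightarrow> l = take j l @ l!j # l!Suc j # drop (Suc (Suc j)) l"
  by (metis Cons_nth_drop_Suc Suc_lessD append_take_drop_id)

lemma decomp1: "j < length l \<Longrightarrow> l = take j l @ l!j # drop (Suc j) l"
  by (metis Cons_nth_drop_Suc append_take_drop_id)

lemma reduction: "valid l \<Longrightarrow> evw l = id \<or> finite {x. evw l x = x}"
proof (induction "length l" arbitrary: l rule: less_induct)
  case less
  have vl: "set l \<subseteq> Lts" using less.prems by (simp add: valid_def)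
  show ?case
  proof (cases "\<exists>j. Suc j < length l \<and> isl (l!j) = isl (l!Suc j)")
    case True
    then obtain j where j: "Suc j < length l" "isl (l!j) = isl (l!Suc j)" by blast
    define u v a b where "u = take j l" "v = drop (Suc (Suc j)) l" "a = l!j" "b = l!Suc j"
    have l: "l = u @ a # b # v" using decomp2[OF j(1)] by (simp add: u_v_a_b_def)
    have ab: "a \<in> Lts" "b \<in> Lts" using vl l by auto
    have mg: "merge a b \<in> Lts" "ev (merge a b) = ev a \<circ> ev b" using merge_ok[OF ab] j(2) u_v_a_b_def by auto
    define l' where "l' = u @ merge a b # v"
    have "length l' < length l" using l by (simp add: l'_def)
    moreover have "valid l'" using vl l mg by (auto simp: valid_def l'_def)
    moreover have "evw l' = evw l" using l mg by (simp add: l'_def o_assoc)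
    ultimately show ?thesis using less.hyps by metis
  next
    case nsame: False
    show ?thesis
    proof (cases "\<exists>j < length l. ev (l!j) = id")
      case True
      then obtain j where j: "j < length l" "ev (l!j) = id" by blast
      define u v a where "u = take j l" "v = drop (Suc j) l" "a = l!j"
      have l: "l = u @ a # v" using decomp1[OF j(1)] by (simp add: u_v_a_def)
      define l' where "l' = u @ v"
      have "length l' < length l" using l by (simp add: l'_def)
      moreover have "valid l'" using vl l by (auto simp: valid_def l'_def)
      moreover have "evw l' = evw l"
      proof -
        have "evw (u @ a # v) = evw (u @ v)" using j(2) u_v_a_def by simp
        then show ?thesis using l by (simp add: l'_def)
      qed
      ultimately show ?thesis using less.hyps by metis
    next
      case False
      then have nt: "\<forall>a\<in>set l. ev a \<noteq> id" by (metis in_set_conv_nth)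
      have alt: "\<forall>j. Suc j < length l \<longrightarrow> isl (l!j) \<noteq> isl (l!Suc j)" using nsame by blast
      consider "l = []" | a where "l = [a]" | a t where "l = a # t" "t \<noteq> []"
        by (metis list.exhaust)
      then show ?thesis
      proof cases
        case 1 then show ?thesis by simp
      next
        case (2 a)
        then have a: "a \<in> Lts" "ev a \<noteq> id" using vl nt by auto
        show ?thesis
        proof (cases a)
          case (Inl g)
          then have "g \<in> G" "g \<noteq> id" using a by auto
          then show ?thesis using G_cof 2 Inl by simp
        next
          case (Inr h)
          then have "h \<in> carrier H" "F h \<noteq> id" using a by auto
          then have "{x. F h x = x} = {}" using F_free' by blast
          then show ?thesis using 2 Inr by simp
        qed
      next
        case (3 a t)
        obtain m b where t: "t = m @ [b]" using 3(2) by (metis rev_exhaust)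
        have l: "l = a # m @ [b]" using 3 t by simp
        have len: "length l \<ge> 2" using l by simp
        have l0: "l!0 = a" and ll: "l!(length l - 1) = b" using l by (simp_all add: nth_append)
        show ?thesis
        proof (cases "isl a = isl b")
          case False
          then have "finite {x. evw l x = x}"
            using core[OF less.prems len nt alt] l0 ll by simp
          then show ?thesis by simp
        next
          case True
          have ab: "a \<in> Lts" "b \<in> Lts" using vl l by auto
          have mg: "merge b a \<in> Lts" "ev (merge b a) = ev b \<circ> ev a" using merge_ok[OF ab(2,1)] True by auto
          define l' where "l' = m @ [merge b a]"
          have "length l' < length l" using l by (simp add: l'_def)
          moreover have "valid l'" using vl l mg by (auto simp: valid_def l'_def)
          ultimately have ih: "evw l' = id \<or> finite {x. evw l' x = x}" using less.hyps by metis
          have e1: "evw l' = (evw m \<circ> ev b) \<circ> ev a" using mg by (simp add: l'_def o_assoc)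
          have e2: "evw l = ev a \<circ> (evw m \<circ> ev b)" using l by (simp add: o_assoc)
          show ?thesis using conj_lemma[OF ev_bij[OF ab(1)], of "evw m \<circ> ev b"] ih e1 e2 by simp
        qed
      qed
    qed
  qed
qed

end



context cons begin

lemma F_carrier: "h \<in> carrier H \<Longrightarrow> F h \<in> carrier SymN"
  using F_bij SymN_carrier by blast

lemma F_hom: "F \<in> hom H SymN"
  unfolding hom_def using F_carrier grpH
  by (auto simp: SymN_mult F_comp)

lemma F_inv: "h \<in> carrier H \<Longrightarrow> inv_into UNIV (F h) = F (inv\<^bsub>H\<^esub> h)"
proof -
  assume h: "h \<in> carrier H"
  have i: "inv\<^bsub>H\<^esub> h \<in> carrier H" using grpH h by (simp add: group.inv_closed)
  have "F h \<circ> F (inv\<^bsub>H\<^esub> h) = id" "F (inv\<^bsub>H\<^esub> h) \<circ> F h = id"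
    using F_comp[OF h i] F_comp[OF i h] grpH h by (auto simp: group.r_inv group.l_inv F_one fun_eq_iff)
  then show ?thesis by (rule inv_unique_comp)
qed

lemma G_carrier: "G \<subseteq> carrier SymN" using G_sub SymN_carrier by blast

lemma gen_words: "\<sigma> \<in> generate SymN (G \<union> F ` carrier H) \<Longrightarrow> \<exists>l. valid l \<and> \<sigma> = evw l"
proof (induction rule: generate.induct)
  case one
  show ?case by (rule exI[of _ "[]"]) (simp add: valid_def SymN_one)
next
  case (incl h)
  then show ?case
  proof
    assume "h \<in> G" then show ?thesis by (intro exI[of _ "[Inl h]"]) (simp add: valid_def)
  next
    assume "h \<in> F ` carrier H"
    then obtain k where "k \<in> carrier H" "h = F k" by blast
    then show ?thesis by (intro exI[of _ "[Inr k]"]) (simp add: valid_def)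
  qed
next
  case (inv h)
  then show ?case
  proof
    assume hG: "h \<in> G"
    have sg: "subgroup G SymN" using cofG by (simp add: cofinitary_group_def)
    have "m_inv SymN h \<in> G" using sg hG by (simp add: subgroup.m_inv_closed)
    then show ?thesis by (intro exI[of _ "[Inl (m_inv SymN h)]"]) (simp add: valid_def)
  next
    assume "h \<in> F ` carrier H"
    then obtain k where k: "k \<in> carrier H" "h = F k" by blast
    have "m_inv SymN h = F (inv\<^bsub>H\<^esub> k)" using k F_carrier SymN_inv F_inv by simp
    moreover have "inv\<^bsub>H\<^esub> k \<in> carrier H" using grpH k by (simp add: group.inv_closed)
    ultimately show ?thesis by (intro exI[of _ "[Inr (inv\<^bsub>H\<^esub> k)]"]) (simp add: valid_def)
  qed
next
  case (eng h1 h2)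
  obtain l1 l2 where l: "valid l1" "h1 = evw l1" "valid l2" "h2 = evw l2" using eng.IH by blast
  have sub: "G \<union> F ` carrier H \<subseteq> carrier SymN" using G_carrier F_carrier by blast
  have "h1 \<in> carrier SymN" "h2 \<in> carrier SymN"
    using group.generate_in_carrier[OF SymN_group sub] eng.hyps by auto
  then have "h1 \<otimes>\<^bsub>SymN\<^esub> h2 = evw (l1 @ l2)" using l by (simp add: SymN_mult)
  moreover have "valid (l1 @ l2)" using l by (simp add: valid_def)
  ultimately show ?case by blast
qed

theorem result:
  "(\<forall>h\<in>carrier H. F h \<in> carrier SymN)
   \<and> SymN\<lparr>carrier := F ` carrier H\<rparr> \<cong> H
   \<and> generate SymN (F ` carrier H) = F ` carrier H
   \<and> cofinitary_group (generate SymN (G \<union> F ` carrier H))"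
proof (intro conjI)
  show "\<forall>h\<in>carrier H. F h \<in> carrier SymN" using F_carrier by blast
  have "F \<in> iso H (SymN\<lparr>carrier := F ` carrier H\<rparr>)"
    using F_hom F_inj unfolding iso_def hom_def by (auto simp: bij_betw_def)
  then have "H \<cong> SymN\<lparr>carrier := F ` carrier H\<rparr>" by (rule is_isoI)
  then show "SymN\<lparr>carrier := F ` carrier H\<rparr> \<cong> H" using group.iso_sym[OF grpH] by blast
  have gh: "group_hom H SymN F" using grpH SymN_group F_hom
    by (simp add: group_hom_def group_hom_axioms_def)
  have sgF: "subgroup (F ` carrier H) SymN" using group_hom.img_is_subgroup[OF gh] .
  show "generate SymN (F ` carrier H) = F ` carrier H"
    using group.generate_subgroup_incl[OF SymN_group _ sgF] generate.incl[of _ "F ` carrier H" SymN]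
    by blast
  have sub: "G \<union> F ` carrier H \<subseteq> carrier SymN" using G_carrier F_carrier by blast
  show "cofinitary_group (generate SymN (G \<union> F ` carrier H))"
    unfolding cofinitary_group_def
  proof (intro conjI ballI)
    show "subgroup (generate SymN (G \<union> F ` carrier H)) SymN"
      using group.generate_is_subgroup[OF SymN_group sub] .
    fix \<sigma> assume "\<sigma> \<in> generate SymN (G \<union> F ` carrier H)"
    then obtain l where "valid l" "\<sigma> = evw l" using gen_words by blast
    then show "cofinitary_perm \<sigma>" using reduction by (simp add: cofinitary_perm_def)
  qed
qed

end


theorem mainTheorem11:
  fixes G :: "(nat \<Rightarrow> nat) set" and H :: "('a, 'b) monoid_scheme"
  assumes "cofinitary_group G" and "countable G"
    and "group H" and "countable (carrier H)"
  shows "\<exists>f :: nat \<Rightarrow> (nat \<Rightarrow> nat).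
           (\<forall>n. f n \<in> carrier SymN)
         \<and> SymN\<lparr>carrier := generate SymN (range f)\<rparr> \<cong> H
         \<and> cofinitary_group (generate SymN (G \<union> range f))"
proof -
  have "\<one>\<^bsub>SymN\<^esub> \<in> G" using assms(1) by (simp add: cofinitary_group_def subgroup.one_closed)
  then have Gne: "G \<noteq> {}" by blast
  have oneH: "\<one>\<^bsub>H\<^esub> \<in> carrier H" using assms(3) by (simp add: group.is_monoid monoid.one_closed)
  then have Hne: "carrier H \<noteq> {}" by blast
  have cq: "countable (carrier H \<times> (UNIV :: nat set))" using assms(4) by simp
  have qne: "carrier H \<times> (UNIV :: nat set) \<noteq> {}" using Hne by simp
  interpret c: cons G H "from_nat_into G" "from_nat_into (carrier H \<times> (UNIV :: nat set))"
    by (rule cons.intro) (simp_all add: assms Gne range_from_nat_into[OF qne cq])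
  define f where "f n = c.F (from_nat_into (carrier H) n)" for n
  have rf: "range f = c.F ` carrier H"
    using range_from_nat_into[OF Hne assms(4)] unfolding f_def by (metis image_image)
  show ?thesis
    using c.result rf by (intro exI[of _ f]) (auto simp: f_def from_nat_into[OF Hne])
qed

end
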